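(* Let $D$ and $A$ be as in the context, and let $f$ be any map from the set $Y=\{y_1,\dots,y_d\}$ to $A$. Then there exists a derivation $\tau\in\mathrm{Der}(D,A)$ with $\tau|_Y=f$.
   Context: $p$ is an odd prime, $d\geq 2$. $D=\langle y_1,\dots,y_d\rangle$ is a finite $p$-group of exponent $p$ and nilpotency class $2$ with $|D/\Phi(D)|=p^d$ and $|\Phi(D)/\gamma_3(D)|=p^{\binom d2}$ (the free group of rank $d$ in the variety of class-$\le2$ exponent-$p$ groups). Let $S=\langle a\rangle\cong\mathrm{F}_p$ be the trivial $D$-module, and for $1\le j\le d$ let $\delta_j:D\to S$ be the homomorphism with $\delta_j(y_j)=a$ and $\delta_j(y_i)=0$ for $i\ne j$. Let $A=S\oplus\bigoplus_{i=1}^d\langle r_i\rangle$ with each $\langle r_i\rangle\cong\mathrm{F}_p$, with $D$-action $(la+\sum_i k_ir_i)^g=la+\sum_i k_i(r_i-\delta_i(g))$ for $g\in D$. Derivations $\tau:D\to A$ satisfy $\tau(xy)=\tau(x)^y+\tau(y)$. *)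

theory Defs
  imports "HOL-Algebra.Algebra" "HOL-Number_Theory.Residues"
begin

definition maximal_subgroup :: "('a, 'b) monoid_scheme \<Rightarrow> 'a set \<Rightarrow> bool" where
  "maximal_subgroup G H \<longleftrightarrow> subgroup H G \<and> H \<noteq> carrier G \<and>
     (\<forall>K. subgroup K G \<and> H \<subseteq> K \<longrightarrow> K = H \<or> K = carrier G)"

definition frattini :: "('a, 'b) monoid_scheme \<Rightarrow> 'a set" where
  "frattini G = carrier G \<inter> \<Inter> {H. maximal_subgroup G H}"

definition comm_subgroup :: "('a, 'b) monoid_scheme \<Rightarrow> 'a set \<Rightarrow> 'a set \<Rightarrow> 'a set" where
  "comm_subgroup G H K = generate G
     {h \<otimes>\<^bsub>G\<^esub> k \<otimes>\<^bsub>G\<^esub> inv\<^bsub>G\<^esub> h \<otimes>\<^bsub>G\<^esub> inv\<^bsub>G\<^esub> k | h k. h \<in> H \<and> k \<in> K}"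

definition gamma2 :: "('a, 'b) monoid_scheme \<Rightarrow> 'a set" where
  "gamma2 G = comm_subgroup G (carrier G) (carrier G)"

definition gamma3 :: "('a, 'b) monoid_scheme \<Rightarrow> 'a set" where
  "gamma3 G = comm_subgroup G (gamma2 G) (carrier G)"

(* The module A = S + <r_1> + ... + <r_d> over F_p, elements encoded as v :: nat => int,
   v 0 = coefficient of a, v i = coefficient of r_i (1 <= i <= d), entries in {0..p-1},
   and v i = 0 for i > d. *)
definition Amod :: "nat \<Rightarrow> nat \<Rightarrow> (nat \<Rightarrow> int) set" where
  "Amod p d = {v. (\<forall>i\<le>d. v i \<in> {0..<int p}) \<and> (\<forall>i>d. v i = 0)}"

definition addA :: "nat \<Rightarrow> (nat \<Rightarrow> int) \<Rightarrow> (nat \<Rightarrow> int) \<Rightarrow> (nat \<Rightarrow> int)" where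
  "addA p v w = (\<lambda>i. (v i + w i) mod int p)"

(* action: (l a + sum k_i r_i)^g = l a + sum k_i (r_i - delta_i(g)) *)
definition actA :: "nat \<Rightarrow> nat \<Rightarrow> (nat \<Rightarrow> 'a \<Rightarrow> int) \<Rightarrow> 'a \<Rightarrow> (nat \<Rightarrow> int) \<Rightarrow> (nat \<Rightarrow> int)" where
  "actA p d \<delta> g v = (\<lambda>i. if i = 0 then (v 0 - (\<Sum>j\<in>{1..d}. v j * \<delta> j g)) mod int p else v i)"

definition is_derivation ::
  "('a, 'b) monoid_scheme \<Rightarrow> nat \<Rightarrow> nat \<Rightarrow> (nat \<Rightarrow> 'a \<Rightarrow> int) \<Rightarrow> ('a \<Rightarrow> nat \<Rightarrow> int) \<Rightarrow> bool" where
  "is_derivation D p d \<delta> \<tau> \<longleftrightarrow>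
     (\<forall>x\<in>carrier D. \<tau> x \<in> Amod p d) \<and>
     (\<forall>x\<in>carrier D. \<forall>y\<in>carrier D. \<tau> (x \<otimes>\<^bsub>D\<^esub> y) = addA p (actA p d \<delta> y (\<tau> x)) (\<tau> y))"

end

theory Submission
  imports Defs
begin


definition cm :: "('a,'b) monoid_scheme \<Rightarrow> 'a \<Rightarrow> 'a \<Rightarrow> 'a" where
  "cm G x y = x \<otimes>\<^bsub>G\<^esub> y \<otimes>\<^bsub>G\<^esub> inv\<^bsub>G\<^esub> x \<otimes>\<^bsub>G\<^esub> inv\<^bsub>G\<^esub> y"

lemma (in group) pow_mod_p:
  assumes "s \<in> carrier G" "s [^] (p::nat) = \<one>"
  shows "s [^] k = s [^] (k mod p)"
proof -
  have "s [^] k = s [^] (p * (k div p)) \<otimes> s [^] (k mod p)"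
    using assms(1) by (simp add: nat_pow_mult)
  also have "s [^] (p * (k div p)) = \<one>"
    using assms by (simp add: nat_pow_pow[symmetric])
  finally show ?thesis using assms by simp
qed

lemma (in group) W_subgroup:
  assumes N: "subgroup N G" and cen: "\<forall>n\<in>N. \<forall>x\<in>carrier G. n \<otimes> x = x \<otimes> n"
    and s: "s \<in> carrier G"
  shows "subgroup {x\<in>carrier G. \<exists>n\<in>N. x \<otimes> s = s \<otimes> x \<otimes> n} G"
proof (rule subgroupI)
  show "{x\<in>carrier G. \<exists>n\<in>N. x \<otimes> s = s \<otimes> x \<otimes> n} \<noteq> {}"
  proof -
    have "\<one> \<in> {x\<in>carrier G. \<exists>n\<in>N. x \<otimes> s = s \<otimes> x \<otimes> n}"
      using s subgroup.one_closed[OF N] by (auto intro!: bexI[of _ \<one>])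
    thus ?thesis by blast
  qed
next
  fix a assume "a \<in> {x\<in>carrier G. \<exists>n\<in>N. x \<otimes> s = s \<otimes> x \<otimes> n}"
  then obtain n where a: "a \<in> carrier G" "n \<in> N" "a \<otimes> s = s \<otimes> a \<otimes> n" by auto
  have nc: "n \<in> carrier G" using subgroup.mem_carrier[OF N a(2)] .
  have ni: "inv n \<in> N" using subgroup.m_inv_closed[OF N a(2)] .
  have sa: "s \<otimes> a = a \<otimes> s \<otimes> inv n"
    using a(3) a nc s by (simp add: m_assoc)
  have c: "inv n \<otimes> inv a = inv a \<otimes> inv n" by (rule cen[rule_format, OF ni inv_closed[OF a(1)]])
  have "inv a \<otimes> s = inv a \<otimes> (s \<otimes> a) \<otimes> inv a"
    using a nc s by (simp add: m_assoc)
  also have "\<dots> = inv a \<otimes> (a \<otimes> s \<otimes> inv n) \<otimes> inv a" using sa by simp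
  also have "\<dots> = s \<otimes> (inv n \<otimes> inv a)" using a(1) nc s by (simp add: m_assoc[symmetric])
  also have "\<dots> = s \<otimes> inv a \<otimes> inv n" using c a(1) nc s by (simp add: m_assoc)
  finally show "inv a \<in> {x\<in>carrier G. \<exists>n\<in>N. x \<otimes> s = s \<otimes> x \<otimes> n}"
    using a subgroup.m_inv_closed[OF N a(2)] by auto
next
  fix a b assume "a \<in> {x\<in>carrier G. \<exists>n\<in>N. x \<otimes> s = s \<otimes> x \<otimes> n}" "b \<in> {x\<in>carrier G. \<exists>n\<in>N. x \<otimes> s = s \<otimes> x \<otimes> n}"
  then obtain n m where a: "a \<in> carrier G" "n \<in> N" "a \<otimes> s = s \<otimes> a \<otimes> n"
    and b: "b \<in> carrier G" "m \<in> N" "b \<otimes> s = s \<otimes> b \<otimes> m" by auto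
  have nc: "n \<in> carrier G" "m \<in> carrier G" using subgroup.mem_carrier[OF N a(2)] subgroup.mem_carrier[OF N b(2)] by auto
  have "a \<otimes> b \<otimes> s = a \<otimes> (s \<otimes> b \<otimes> m)" using a(1) b s by (simp add: m_assoc)
  also have "\<dots> = (a \<otimes> s) \<otimes> b \<otimes> m" using a(1) b(1) s nc by (simp add: m_assoc)
  also have "\<dots> = s \<otimes> a \<otimes> (n \<otimes> b) \<otimes> m" using a b s nc by (simp add: m_assoc)
  also have "\<dots> = s \<otimes> a \<otimes> (b \<otimes> n) \<otimes> m" by (simp only: cen[rule_format, OF a(2) b(1)])
  also have "\<dots> = s \<otimes> (a \<otimes> b) \<otimes> (n \<otimes> m)" using a(1) b(1) s nc by (simp add: m_assoc)
  finally show "a \<otimes> b \<in> {x\<in>carrier G. \<exists>n\<in>N. x \<otimes> s = s \<otimes> x \<otimes> n}"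
    using a b subgroup.m_closed[OF N a(2) b(2)] by auto
qed auto

lemma (in group) pow_comm_mod:
  assumes N: "subgroup N G" and cen: "\<forall>n\<in>N. \<forall>x\<in>carrier G. n \<otimes> x = x \<otimes> n"
    and s: "s \<in> carrier G" and x: "x \<in> carrier G" and n: "n \<in> N" and e: "x \<otimes> s = s \<otimes> x \<otimes> n"
  shows "\<exists>m\<in>N. x \<otimes> s [^] (j::nat) = s [^] j \<otimes> x \<otimes> m"
proof (induction j)
  case 0 thus ?case using x subgroup.one_closed[OF N] by (auto intro!: bexI[of _ \<one>])
next
  case (Suc j)
  then obtain m where m: "m \<in> N" "x \<otimes> s [^] j = s [^] j \<otimes> x \<otimes> m" by auto
  have mc: "m \<in> carrier G" "n \<in> carrier G" using subgroup.mem_carrier[OF N m(1)] subgroup.mem_carrier[OF N n] by auto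
  have "x \<otimes> s [^] Suc j = (x \<otimes> s [^] j) \<otimes> s" using x s by (simp add: m_assoc)
  also have "\<dots> = s [^] j \<otimes> x \<otimes> (m \<otimes> s)" using x s mc m by (simp add: m_assoc)
  also have "\<dots> = s [^] j \<otimes> (x \<otimes> s) \<otimes> m"
  proof -
    have "m \<otimes> s = s \<otimes> m" by (rule cen[rule_format, OF m(1) s])
    thus ?thesis using x s mc by (simp add: m_assoc)
  qed
  also have "\<dots> = s [^] Suc j \<otimes> x \<otimes> (n \<otimes> m)" using x s mc e by (simp add: m_assoc)
  finally show ?case using subgroup.m_closed[OF N n m(1)] by (rule bexI)
qed

lemma (in group) card_gen_bound:
  assumes fin: "finite (carrier G)" and N: "subgroup N G"
    and cen: "\<forall>n\<in>N. \<forall>x\<in>carrier G. n \<otimes> x = x \<otimes> n" and p: "1 < p"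
  shows "finite S \<Longrightarrow> S \<subseteq> carrier G \<Longrightarrow> (\<forall>s\<in>S. s [^] (p::nat) = \<one>) \<Longrightarrow>
    (\<forall>s\<in>S. \<forall>t\<in>S. \<exists>n\<in>N. t \<otimes> s = s \<otimes> t \<otimes> n) \<Longrightarrow>
    card (generate G (S \<union> N)) \<le> p ^ card S * card N"
proof (induction S rule: finite_induct)
  case empty
  have "generate G N = N"
    using generate_subgroup_incl[OF _ N] generate.incl[of _ N G] by blast
  thus ?case by simp
next
  case (insert s S)
  have s: "s \<in> carrier G" "s [^] p = \<one>" using insert.prems by auto
  define R where "R = generate G (S \<union> N)"
  have NC: "N \<subseteq> carrier G" using N subgroup.subset by blast
  have SC: "S \<union> N \<subseteq> carrier G" using insert.prems NC by auto
  have IH: "card R \<le> p ^ card S * card N" unfolding R_def using insert by auto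
  have Rsub: "subgroup R G" unfolding R_def using generate_is_subgroup[OF SC] .
  have RC: "R \<subseteq> carrier G" using Rsub subgroup.subset by blast
  have finR: "finite R" using RC fin finite_subset by blast
  define W where "W = {x\<in>carrier G. \<exists>n\<in>N. x \<otimes> s = s \<otimes> x \<otimes> n}"
  have Wsub: "subgroup W G" unfolding W_def using W_subgroup[OF N cen s(1)] .
  have SNW: "S \<union> N \<subseteq> W"
  proof
    fix x assume "x \<in> S \<union> N"
    then show "x \<in> W"
    proof
      assume "x \<in> S"
      thus ?thesis unfolding W_def using insert.prems(1,3) by auto
    next
      assume xN: "x \<in> N"
      hence "x \<in> carrier G" using NC by auto
      thus ?thesis unfolding W_def using xN cen s subgroup.one_closed[OF N]
        by (auto intro!: bexI[of _ \<one>])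
    qed
  qed
  have RW: "R \<subseteq> W" unfolding R_def using generate_subgroup_incl[OF SNW Wsub] .
  have comm: "\<exists>m\<in>N. x \<otimes> s [^] (j::nat) = s [^] j \<otimes> x \<otimes> m" if "x \<in> R" for x j
  proof -
    from that RW obtain n where "x \<in> carrier G" "n \<in> N" "x \<otimes> s = s \<otimes> x \<otimes> n"
      unfolding W_def by auto
    thus ?thesis by (rule pow_comm_mod[OF N cen s(1)])
  qed
  define T where "T = (\<lambda>(i,x). s [^] i \<otimes> x) ` ({..<p} \<times> R)"
  have Tsub: "subgroup T G"
  proof (rule subgroupI)
    show "T \<subseteq> carrier G" unfolding T_def using RC s by auto
    show "T \<noteq> {}" unfolding T_def using subgroup.one_closed[OF Rsub] p by auto
  next
    fix a assume "a \<in> T"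
    then obtain i x where ix: "i < p" "x \<in> R" "a = s [^] i \<otimes> x" unfolding T_def by auto
    have xc: "x \<in> carrier G" using ix RC by auto
    have ix': "inv x \<in> R" using subgroup.m_inv_closed[OF Rsub ix(2)] .
    obtain m where m: "m \<in> N" "inv x \<otimes> s [^] ((p - i) mod p) = s [^] ((p - i) mod p) \<otimes> inv x \<otimes> m"
      using comm[OF ix'] by blast
    have mc: "m \<in> carrier G" using m NC by auto
    have "inv (s [^] i) = s [^] (p - i)"
      using s ix by (intro inv_equality) (auto simp: nat_pow_mult)
    also have "\<dots> = s [^] ((p - i) mod p)" using pow_mod_p[OF s] by blast
    finally have e: "inv a = s [^] ((p - i) mod p) \<otimes> (inv x \<otimes> m)"
      using ix xc s m(2) mc by (simp add: inv_mult_group m_assoc)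
    have "inv x \<otimes> m \<in> R" using ix' m(1) generate.incl[of m "S \<union> N" G] unfolding R_def
      using subgroup.m_closed[OF Rsub] R_def by auto
    moreover have "(p - i) mod p < p" using p by auto
    ultimately show "inv a \<in> T" unfolding T_def using e by force
  next
    fix a b assume "a \<in> T" "b \<in> T"
    then obtain i x j y where ix: "i < p" "x \<in> R" "a = s [^] i \<otimes> x"
      and jy: "j < p" "y \<in> R" "b = s [^] j \<otimes> y" unfolding T_def by auto
    have xc: "x \<in> carrier G" "y \<in> carrier G" using ix jy RC by auto
    obtain m where m: "m \<in> N" "x \<otimes> s [^] j = s [^] j \<otimes> x \<otimes> m" using comm[OF ix(2)] by blast
    have mc: "m \<in> carrier G" using m NC by auto
    have "a \<otimes> b = s [^] i \<otimes> (x \<otimes> s [^] j) \<otimes> y" using ix jy xc s by (simp add: m_assoc)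
    also have "\<dots> = s [^] (i + j) \<otimes> (x \<otimes> m \<otimes> y)"
      using m xc mc s by (simp add: m_assoc nat_pow_mult[symmetric])
    also have "s [^] (i + j) = s [^] ((i + j) mod p)" using pow_mod_p[OF s] by blast
    finally have e: "a \<otimes> b = s [^] ((i + j) mod p) \<otimes> (x \<otimes> m \<otimes> y)" .
    have "m \<in> R" using m(1) generate.incl[of m "S \<union> N" G] unfolding R_def by auto
    hence "x \<otimes> m \<otimes> y \<in> R" using ix jy subgroup.m_closed[OF Rsub] by auto
    moreover have "(i + j) mod p < p" using p by auto
    ultimately show "a \<otimes> b \<in> T" unfolding T_def using e by force
  qed
  have "insert s S \<union> N \<subseteq> T"
  proof
    fix z assume "z \<in> insert s S \<union> N"
    then consider "z = s" | "z \<in> S \<union> N" by auto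
    then show "z \<in> T"
    proof cases
      case 1
      have "s = s [^] (1::nat) \<otimes> \<one>" using s by simp
      thus ?thesis unfolding T_def using 1 p subgroup.one_closed[OF Rsub] by force
    next
      case 2
      hence "z \<in> R" unfolding R_def using generate.incl[of z "S \<union> N" G] by auto
      moreover have "z = s [^] (0::nat) \<otimes> z" using 2 SC by auto
      ultimately show ?thesis unfolding T_def using p
        by (intro image_eqI[of _ _ "(0::nat,z)"]) auto
    qed
  qed
  hence "generate G (insert s S \<union> N) \<subseteq> T" using generate_subgroup_incl[OF _ Tsub] by blast
  hence "card (generate G (insert s S \<union> N)) \<le> card T"
    by (rule card_mono[rotated]) (simp add: T_def finR)
  also have "card T \<le> card ({..<p} \<times> R)" unfolding T_def by (rule card_image_le) (simp add: finR)
  also have "\<dots> = p * card R" by (simp add: card_cartesian_product)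
  also have "\<dots> \<le> p * (p ^ card S * card N)" using IH by simp
  also have "\<dots> = p ^ card (insert s S) * card N" using insert.hyps by simp
  finally show ?case .
qed



lemma sum_mod_cong: "(\<Sum>j\<in>A. f j * (g j mod m)) mod m = (\<Sum>j\<in>A. f j * g j) mod (m::int)"
proof -
  have "(\<Sum>j\<in>A. f j * (g j mod m)) mod m = (\<Sum>j\<in>A. (f j * (g j mod m)) mod m) mod m"
    by (simp add: mod_sum_eq)
  also have "\<dots> = (\<Sum>j\<in>A. (f j * g j) mod m) mod m" by (simp add: mod_mult_right_eq)
  also have "\<dots> = (\<Sum>j\<in>A. f j * g j) mod m" by (simp add: mod_sum_eq)
  finally show ?thesis .
qed

lemma sum_mod_cong2: "(\<Sum>j\<in>A. (g j mod m) * f j) mod m = (\<Sum>j\<in>A. g j * f j) mod (m::int)"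
  using sum_mod_cong[of f g m A] by (simp add: mult.commute)

lemma mod_diff_cong: "u mod m = w mod m \<Longrightarrow> (a - u) mod m = (a - w) mod (m::int)"
  by (metis mod_diff_right_eq)

definition SD :: "('a,'b) monoid_scheme \<Rightarrow> nat \<Rightarrow> nat \<Rightarrow> (nat \<Rightarrow> 'a \<Rightarrow> int) \<Rightarrow> ('a \<times> (nat \<Rightarrow> int)) monoid" where
  "SD D p d \<delta> = \<lparr>carrier = carrier D \<times> Amod p d,
     monoid.mult = (\<lambda>a b. (fst a \<otimes>\<^bsub>D\<^esub> fst b, addA p (actA p d \<delta> (fst b) (snd a)) (snd b))),
     one = (\<one>\<^bsub>D\<^esub>, (\<lambda>i. 0))\<rparr>"

definition negA :: "nat \<Rightarrow> (nat \<Rightarrow> int) \<Rightarrow> (nat \<Rightarrow> int)" where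
  "negA p v = (\<lambda>i. (- v i) mod int p)"

locale setting = group D for D (structure) +
  fixes p d :: nat and \<delta> :: "nat \<Rightarrow> 'a \<Rightarrow> int"
  assumes p1: "1 < p"
  and drange: "\<And>j x. j \<in> {1..d} \<Longrightarrow> x \<in> carrier D \<Longrightarrow> \<delta> j x \<in> {0..<int p}"
  and dmult: "\<And>j x y. j \<in> {1..d} \<Longrightarrow> x \<in> carrier D \<Longrightarrow> y \<in> carrier D \<Longrightarrow>
      \<delta> j (x \<otimes> y) = (\<delta> j x + \<delta> j y) mod int p"
begin

abbreviation "act \<equiv> actA p d \<delta>"
abbreviation "ad \<equiv> addA p"

lemma d_one: "j \<in> {1..d} \<Longrightarrow> \<delta> j \<one> = 0"
proof -
  assume j: "j \<in> {1..d}"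
  have r: "\<delta> j \<one> \<in> {0..<int p}" using drange[OF j] by simp
  have e: "\<delta> j \<one> = (\<delta> j \<one> + \<delta> j \<one>) mod int p" using dmult[OF j, of \<one> \<one>] by simp
  have "(\<delta> j \<one> + \<delta> j \<one>) mod int p = \<delta> j \<one> mod int p" using e r by simp
  hence "int p dvd (\<delta> j \<one> + \<delta> j \<one>) - \<delta> j \<one>" using mod_eq_dvd_iff by blast
  hence dv: "int p dvd \<delta> j \<one>" by simp
  show ?thesis
  proof (rule ccontr)
    assume "\<delta> j \<one> \<noteq> 0"
    hence "0 < \<delta> j \<one>" using r by auto
    hence "int p \<le> \<delta> j \<one>" using dv zdvd_imp_le by blast
    thus False using r by auto
  qed
qed

lemma d_inv: "j \<in> {1..d} \<Longrightarrow> x \<in> carrier D \<Longrightarrow> \<delta> j (inv x) = (- \<delta> j x) mod int p"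
proof -
  assume j: "j \<in> {1..d}" and x: "x \<in> carrier D"
  have r: "\<delta> j (inv x) \<in> {0..<int p}" using drange[OF j] x by simp
  have "(\<delta> j x + \<delta> j (inv x)) mod int p = 0" using dmult[OF j x inv_closed[OF x]] d_one[OF j] x by simp
  hence "int p dvd \<delta> j (inv x) - (- \<delta> j x)" by (simp add: dvd_eq_mod_eq_0 add.commute)
  hence "\<delta> j (inv x) mod int p = (- \<delta> j x) mod int p" using mod_eq_dvd_iff by blast
  thus ?thesis using r by simp
qed

lemma d_cm: "j \<in> {1..d} \<Longrightarrow> x \<in> carrier D \<Longrightarrow> y \<in> carrier D \<Longrightarrow> \<delta> j (cm D x y) = 0"
  unfolding cm_def
  using p1 by (simp add: dmult d_inv mod_simps)

lemma act_Amod: "v \<in> Amod p d \<Longrightarrow> act g v \<in> Amod p d"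
  using p1 unfolding Amod_def actA_def by auto

lemma add_Amod: "v \<in> Amod p d \<Longrightarrow> w \<in> Amod p d \<Longrightarrow> ad v w \<in> Amod p d"
  using p1 unfolding Amod_def addA_def by auto

lemma negA_Amod: "negA p v \<in> Amod p d \<longleftrightarrow> (\<forall>i>d. v i mod int p = 0)"
  using p1 unfolding Amod_def negA_def by (auto simp: mod_minus_eq)

lemma Amod_mod: "v \<in> Amod p d \<Longrightarrow> v i mod int p = v i"
  unfolding Amod_def by (cases "i \<le> d") auto

lemma act_comp:
  assumes g: "g \<in> carrier D" and h: "h \<in> carrier D"
  shows "act h (act g v) = act (g \<otimes> h) v"
proof
  fix i show "act h (act g v) i = act (g \<otimes> h) v i"
  proof (cases "i = 0")
    case True
    have s1: "(\<Sum>j\<in>{1..d}. act g v j * \<delta> j h) = (\<Sum>j\<in>{1..d}. v j * \<delta> j h)"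
      by (rule sum.cong) (auto simp: actA_def)
    have s2: "(\<Sum>j\<in>{1..d}. v j * \<delta> j (g \<otimes> h)) mod int p
        = (\<Sum>j\<in>{1..d}. v j * \<delta> j g + v j * \<delta> j h) mod int p"
      using sum_mod_cong[of v "\<lambda>j. \<delta> j g + \<delta> j h" p "{1..d}"]
      by (simp add: dmult g h distrib_left)
    have "act h (act g v) i = ((v 0 - (\<Sum>j\<in>{1..d}. v j * \<delta> j g)) mod int p
        - (\<Sum>j\<in>{1..d}. v j * \<delta> j h)) mod int p"
      using True s1 by (simp add: actA_def)
    also have "\<dots> = (v 0 - ((\<Sum>j\<in>{1..d}. v j * \<delta> j g) + (\<Sum>j\<in>{1..d}. v j * \<delta> j h))) mod int p"
      by (simp add: mod_simps algebra_simps)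
    also have "\<dots> = (v 0 - (\<Sum>j\<in>{1..d}. v j * \<delta> j (g \<otimes> h)) mod int p) mod int p"
    proof -
      have s2': "(\<Sum>j\<in>{1..d}. v j * \<delta> j (g \<otimes> h)) mod int p
        = ((\<Sum>j\<in>{1..d}. v j * \<delta> j g) + (\<Sum>j\<in>{1..d}. v j * \<delta> j h)) mod int p"
        using s2 by (simp add: sum.distrib)
      show ?thesis by (simp only: s2' mod_diff_right_eq)
    qed
    also have "\<dots> = act (g \<otimes> h) v i" using True by (simp add: actA_def mod_simps)
    finally show ?thesis .
  next
    case False thus ?thesis by (simp add: actA_def)
  qed
qed

lemma act_add: "act g (ad v w) = ad (act g v) (act g w)"
proof
  fix i show "act g (ad v w) i = ad (act g v) (act g w) i"
  proof (cases "i = 0")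
    case True
    define SX where "SX = (\<Sum>j\<in>{1..d}. ad v w j * \<delta> j g)"
    define SV where "SV = (\<Sum>j\<in>{1..d}. v j * \<delta> j g)"
    define SW where "SW = (\<Sum>j\<in>{1..d}. w j * \<delta> j g)"
    have "SX mod int p = (\<Sum>j\<in>{1..d}. v j * \<delta> j g + w j * \<delta> j g) mod int p"
      unfolding SX_def
      using sum_mod_cong2[where g="\<lambda>j. v j + w j" and f="\<lambda>j. \<delta> j g" and m="int p" and A="{1..d}"]
      by (simp add: addA_def distrib_right)
    hence hx: "SX mod int p = (SV + SW) mod int p" unfolding SV_def SW_def
      by (simp add: sum.distrib)
    have "act g (ad v w) i = ((v 0 + w 0) mod int p - SX) mod int p"
      using True by (simp add: actA_def addA_def SX_def)
    also have "\<dots> = (v 0 + w 0 - SX) mod int p" by (rule mod_diff_left_eq)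
    also have "\<dots> = (v 0 + w 0 - (SV + SW)) mod int p" by (rule mod_diff_cong[OF hx])
    also have "\<dots> = ((v 0 - SV) mod int p + (w 0 - SW) mod int p) mod int p"
      by (subst mod_add_eq) (simp add: algebra_simps)
    also have "\<dots> = ad (act g v) (act g w) i"
      using True by (simp add: actA_def addA_def SV_def SW_def)
    finally show ?thesis .
  next
    case False thus ?thesis by (simp add: actA_def addA_def)
  qed
qed

lemma add_assoc: "ad (ad v w) u = ad v (ad w u)"
  by (simp add: addA_def mod_simps algebra_simps)

lemma add_comm: "ad v w = ad w v"
  by (simp add: addA_def algebra_simps)

lemma act_one: "v \<in> Amod p d \<Longrightarrow> act \<one> v = v"
  by (auto simp: actA_def d_one Amod_mod)

lemma add_zero: "v \<in> Amod p d \<Longrightarrow> ad (\<lambda>i. 0) v = v"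
  by (auto simp: addA_def Amod_mod)

lemma act_zero: "act g (\<lambda>i. 0) = (\<lambda>i. 0)"
  by (auto simp: actA_def)

end


context setting begin

abbreviation "SG \<equiv> SD D p d \<delta>"

lemma SD_carrier[simp]: "carrier SG = carrier D \<times> Amod p d" by (simp add: SD_def)
lemma SD_mult[simp]: "a \<otimes>\<^bsub>SG\<^esub> b = (fst a \<otimes> fst b, ad (act (fst b) (snd a)) (snd b))"
  by (simp add: SD_def)
lemma SD_one[simp]: "\<one>\<^bsub>SG\<^esub> = (\<one>, \<lambda>i. 0)" by (simp add: SD_def)

lemma zero_Amod: "(\<lambda>i. 0) \<in> Amod p d" using p1 by (simp add: Amod_def)

lemma negA_Amod': "v \<in> Amod p d \<Longrightarrow> negA p v \<in> Amod p d"
  using negA_Amod unfolding Amod_def by auto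

lemma ad_neg: "ad (negA p v) v = (\<lambda>i. 0)"
  by (simp add: addA_def negA_def mod_simps)

lemma SD_group: "group SG"
proof (rule groupI)
  fix a b assume "a \<in> carrier SG" "b \<in> carrier SG"
  thus "a \<otimes>\<^bsub>SG\<^esub> b \<in> carrier SG" by (auto simp: act_Amod add_Amod)
next
  show "\<one>\<^bsub>SG\<^esub> \<in> carrier SG" using zero_Amod by simp
next
  fix a b c assume "a \<in> carrier SG" "b \<in> carrier SG" "c \<in> carrier SG"
  thus "a \<otimes>\<^bsub>SG\<^esub> b \<otimes>\<^bsub>SG\<^esub> c = a \<otimes>\<^bsub>SG\<^esub> (b \<otimes>\<^bsub>SG\<^esub> c)"
    by (auto simp: m_assoc act_add act_comp add_assoc)
next
  fix a assume "a \<in> carrier SG"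
  thus "\<one>\<^bsub>SG\<^esub> \<otimes>\<^bsub>SG\<^esub> a = a" by (auto simp: act_zero add_zero)
next
  fix a assume a: "a \<in> carrier SG"
  then obtain g v where gv: "a = (g, v)" "g \<in> carrier D" "v \<in> Amod p d" by auto
  have "(inv g, act (inv g) (negA p v)) \<in> carrier SG"
    using gv by (simp add: act_Amod negA_Amod')
  moreover have "(inv g, act (inv g) (negA p v)) \<otimes>\<^bsub>SG\<^esub> a = \<one>\<^bsub>SG\<^esub>"
    using gv by (simp add: act_comp act_one negA_Amod' ad_neg)
  ultimately show "\<exists>b\<in>carrier SG. b \<otimes>\<^bsub>SG\<^esub> a = \<one>\<^bsub>SG\<^esub>" by blast
qed

lemma SD_inv: "g \<in> carrier D \<Longrightarrow> v \<in> Amod p d \<Longrightarrow>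
   inv\<^bsub>SG\<^esub> (g, v) = (inv g, act (inv g) (negA p v))"
  by (rule group.inv_equality[OF SD_group])
     (simp_all add: act_comp act_one negA_Amod' ad_neg act_Amod)

lemma snd_mult_nz: "i \<noteq> 0 \<Longrightarrow> snd (a \<otimes>\<^bsub>SG\<^esub> b) i = (snd a i + snd b i) mod int p"
  by (simp add: actA_def addA_def)

lemma snd_inv_nz: "i \<noteq> 0 \<Longrightarrow> a \<in> carrier SG \<Longrightarrow> snd (inv\<^bsub>SG\<^esub> a) i = (- snd a i) mod int p"
  by (cases a) (simp add: SD_inv actA_def negA_def)

lemma fst_inv: "a \<in> carrier SG \<Longrightarrow> fst (inv\<^bsub>SG\<^esub> a) = inv (fst a)"
  by (cases a) (simp add: SD_inv)

lemma central_elem: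
  assumes z: "z \<in> carrier D" "\<forall>x\<in>carrier D. z \<otimes> x = x \<otimes> z" "\<forall>j\<in>{1..d}. \<delta> j z = 0"
    and u: "u \<in> Amod p d" "\<forall>i. i \<noteq> 0 \<longrightarrow> u i = 0"
    and b: "b \<in> carrier SG"
  shows "(z, u) \<otimes>\<^bsub>SG\<^esub> b = b \<otimes>\<^bsub>SG\<^esub> (z, u)"
proof -
  obtain h w where hw: "b = (h, w)" "h \<in> carrier D" "w \<in> Amod p d" using b by auto
  have "act h u = u"
  proof
    fix i show "act h u i = u i"
      using u by (cases "i = 0") (auto simp: actA_def Amod_mod)
  qed
  moreover have "act z w = w"
  proof
    fix i show "act z w i = w i"
      using z hw by (cases "i = 0") (auto simp: actA_def Amod_mod)
  qed
  ultimately show ?thesis using hw z by (simp add: add_comm)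
qed

end

locale setting2 = setting +
  assumes podd: "odd p" and finD: "finite (carrier D)"
  and expo: "\<forall>x\<in>carrier D. x [^] p = \<one>"
  and cen2: "\<forall>x\<in>carrier D. \<forall>y\<in>carrier D. \<forall>z\<in>carrier D. cm D x y \<otimes> z = z \<otimes> cm D x y"
begin

lemma cm_SD_central:
  assumes a: "a \<in> carrier SG" and b: "b \<in> carrier SG" and c: "c \<in> carrier SG"
  shows "cm SG a b \<otimes>\<^bsub>SG\<^esub> c = c \<otimes>\<^bsub>SG\<^esub> cm SG a b"
proof -
  interpret S: group SG by (rule SD_group)
  have cc: "cm SG a b \<in> carrier SG" unfolding cm_def using a b by (intro S.m_closed S.inv_closed)
  have f: "fst (cm SG a b) = cm D (fst a) (fst b)"
    unfolding cm_def using a b by (simp add: fst_inv cm_def)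
  have s: "snd (cm SG a b) i = 0" if i: "i \<noteq> 0" for i
    unfolding cm_def
    apply (simp only: snd_mult_nz[OF i, of "a \<otimes>\<^bsub>SG\<^esub> b \<otimes>\<^bsub>SG\<^esub> inv\<^bsub>SG\<^esub> a" "inv\<^bsub>SG\<^esub> b"]
       snd_mult_nz[OF i, of "a \<otimes>\<^bsub>SG\<^esub> b" "inv\<^bsub>SG\<^esub> a"] snd_mult_nz[OF i, of a b]
       snd_inv_nz[OF i a] snd_inv_nz[OF i b])
    apply (simp add: mod_simps)
    done
  have ab: "fst a \<in> carrier D" "fst b \<in> carrier D" using a b by auto
  have "(fst (cm SG a b), snd (cm SG a b)) \<otimes>\<^bsub>SG\<^esub> c = c \<otimes>\<^bsub>SG\<^esub> (fst (cm SG a b), snd (cm SG a b))"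
    apply (rule central_elem)
    using cc f s ab cen2 d_cm c by auto
  thus ?thesis by simp
qed

end


context setting begin

lemma SD_pow:
  assumes g: "g \<in> carrier D" and v: "v \<in> Amod p d"
  shows "(g, v) [^]\<^bsub>SG\<^esub> (n::nat) = (g [^] n, \<lambda>i. if i = 0
     then (int n * v 0 - int (n choose 2) * (\<Sum>j\<in>{1..d}. v j * \<delta> j g)) mod int p
     else (int n * v i) mod int p)"
proof (induction n)
  case 0 thus ?case by (simp add: SD_def fun_eq_iff numeral_2_eq_2)
next
  case (Suc n)
  define SS where "SS = (\<Sum>j\<in>{1..d}. v j * \<delta> j g)"
  define Wn where "Wn = (\<lambda>i. if i = 0 then (int n * v 0 - int (n choose 2) * SS) mod int p
     else (int n * v i) mod int p)"
  define T where "T = (\<Sum>j\<in>{1..d}. Wn j * \<delta> j g)"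
  have T1: "T = (\<Sum>j\<in>{1..d}. ((int n * v j) mod int p) * \<delta> j g)"
    unfolding T_def Wn_def by (rule sum.cong) auto
  have hT: "T mod int p = (int n * SS) mod int p"
    unfolding T1 SS_def
    using sum_mod_cong2[where g="\<lambda>j. int n * v j" and f="\<lambda>j. \<delta> j g" and m="int p" and A="{1..d}"]
    by (simp add: sum_distrib_left mult.assoc)
  have ch: "int (Suc n choose 2) = int (n choose 2) + int n"
    by (simp add: numeral_2_eq_2)
  have "(g, v) [^]\<^bsub>SG\<^esub> Suc n = (g [^] n \<otimes> g, ad (act g Wn) v)"
    unfolding Wn_def SS_def using Suc by simp
  also have "ad (act g Wn) v = (\<lambda>i. if i = 0
     then (int (Suc n) * v 0 - int (Suc n choose 2) * SS) mod int p
     else (int (Suc n) * v i) mod int p)"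
  proof
    fix i show "ad (act g Wn) v i = (if i = 0
     then (int (Suc n) * v 0 - int (Suc n choose 2) * SS) mod int p
     else (int (Suc n) * v i) mod int p)"
    proof (cases "i = 0")
      case True
      have "ad (act g Wn) v i = (((int n * v 0 - int (n choose 2) * SS) mod int p - T) mod int p + v 0) mod int p"
        using True by (simp add: addA_def actA_def T_def Wn_def)
      also have "\<dots> = ((int n * v 0 - int (n choose 2) * SS + v 0) - T) mod int p"
        by (simp add: mod_simps algebra_simps)
      also have "\<dots> = ((int n * v 0 - int (n choose 2) * SS + v 0) - int n * SS) mod int p"
        by (rule mod_diff_cong[OF hT])
      also have "\<dots> = (int (Suc n) * v 0 - int (Suc n choose 2) * SS) mod int p"
        unfolding ch by (simp add: algebra_simps)
      finally show ?thesis using True by simp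
    next
      case False thus ?thesis by (simp add: addA_def actA_def Wn_def mod_simps algebra_simps)
    qed
  qed
  finally show ?case unfolding SS_def by (simp only: nat_pow_Suc)
qed

lemma finite_Amod: "finite (Amod p d)"
proof (rule inj_on_finite[where f="\<lambda>v. restrict v {..d}" and B="PiE {..d} (\<lambda>_. {0..<int p})"])
  show "inj_on (\<lambda>v. restrict v {..d}) (Amod p d)"
  proof (rule inj_onI)
    fix v w assume vw: "v \<in> Amod p d" "w \<in> Amod p d" "restrict v {..d} = restrict w {..d}"
    show "v = w"
    proof
      fix i show "v i = w i"
      proof (cases "i \<le> d")
        case True thus ?thesis using vw(3) by (metis atMost_iff restrict_apply')
      next
        case False thus ?thesis using vw(1,2) unfolding Amod_def by auto
      qed
    qed
  qed
  show "(\<lambda>v. restrict v {..d}) ` Amod p d \<subseteq> PiE {..d} (\<lambda>_. {0..<int p})"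
    unfolding Amod_def by auto
  show "finite (PiE {..d} (\<lambda>_. {0..<int p}))" by (rule finite_PiE) auto
qed

end

context setting2 begin

lemma p_choose: "int p dvd int (p choose 2)"
proof -
  obtain k where k: "p = 2 * k + 1" using podd oddE by blast
  have "p choose 2 = p * (p - 1) div 2" by (rule choose_two)
  also have "\<dots> = p * k" using k by simp
  finally show ?thesis by simp
qed

lemma SD_exp: "a \<in> carrier SG \<Longrightarrow> a [^]\<^bsub>SG\<^esub> p = \<one>\<^bsub>SG\<^esub>"
proof -
  assume "a \<in> carrier SG"
  then obtain g v where gv: "a = (g, v)" "g \<in> carrier D" "v \<in> Amod p d" by auto
  obtain c where c0: "p choose 2 = p * c" using p_choose by (auto elim: dvdE)
  hence c: "int (p choose 2) = int p * int c" by simp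
  have "(\<lambda>i. if i = 0
     then (int p * v 0 - int (p choose 2) * (\<Sum>j\<in>{1..d}. v j * \<delta> j g)) mod int p
     else (int p * v i) mod int p) = (\<lambda>i. 0)"
    using c by (auto simp: algebra_simps)
  thus ?thesis using gv expo SD_pow[OF gv(2,3), of p] by simp
qed

lemma finite_SD: "finite (carrier SG)"
  using finD finite_Amod by simp

end


lemma (in group) cm_closed: "s \<in> carrier G \<Longrightarrow> t \<in> carrier G \<Longrightarrow> cm G s t \<in> carrier G"
  unfolding cm_def by simp

lemma (in group) cm_ident:
  assumes s: "s \<in> carrier G" and t: "t \<in> carrier G" shows "t \<otimes> s = cm G t s \<otimes> (s \<otimes> t)"
proof -
  have a: "inv s \<otimes> (s \<otimes> t) = t" using s t by (simp add: m_assoc[symmetric])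
  have "cm G t s \<otimes> (s \<otimes> t) = t \<otimes> s \<otimes> (inv t \<otimes> (inv s \<otimes> (s \<otimes> t)))"
    using s t by (simp add: cm_def m_assoc)
  also have "\<dots> = t \<otimes> s" using s t by (simp add: a)
  finally show ?thesis by simp
qed

lemma (in group) cm_inv: "s \<in> carrier G \<Longrightarrow> t \<in> carrier G \<Longrightarrow> inv (cm G s t) = cm G t s"
  unfolding cm_def by (simp add: m_assoc inv_mult_group)

lemma (in group) cm_self: "s \<in> carrier G \<Longrightarrow> cm G s s = \<one>"
  unfolding cm_def by (simp add: m_assoc)

lemma card_pairs: "card {(k::nat, j). k \<in> {1..d} \<and> j \<in> {1..d} \<and> k < j} \<le> d choose 2"
proof -
  let ?I = "{(k::nat, j). k \<in> {1..d} \<and> j \<in> {1..d} \<and> k < j}"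
  have "inj_on (\<lambda>(k,j). {k,j}) ?I"
    by (rule inj_onI) (auto simp: doubleton_eq_iff)
  moreover have "(\<lambda>(k,j). {k,j}) ` ?I \<subseteq> {B. B \<subseteq> {1..d} \<and> card B = 2}" by auto
  moreover have "finite {B. B \<subseteq> {1..(d::nat)} \<and> card B = 2}" by simp
  ultimately have "card ?I \<le> card {B. B \<subseteq> {1..(d::nat)} \<and> card B = 2}"
    using card_inj_on_le by blast
  also have "\<dots> = d choose 2" using n_subsets[of "{1..d}" 2] by simp
  finally show ?thesis .
qed

locale setting3 = setting2 +
  fixes y :: "nat \<Rightarrow> 'a" and f :: "nat \<Rightarrow> nat \<Rightarrow> int"
  assumes ys: "y ` {1..d} \<subseteq> carrier D"
  and gen: "generate D (y ` {1..d}) = carrier D"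
  and cardD: "card (carrier D) = p ^ d * p ^ (d choose 2)"
  and fA: "\<forall>i\<in>{1..d}. f i \<in> Amod p d"
begin

theorem main: "\<exists>\<tau>. is_derivation D p d \<delta> \<tau> \<and> (\<forall>i\<in>{1..d}. \<tau> (y i) = f i)"
proof -
  interpret S: group SG by (rule SD_group)
  define Y' where "Y' = (\<lambda>i. (y i, f i))"
  define Y where "Y = Y' ` {1..d}"
  have YC: "Y \<subseteq> carrier SG" unfolding Y_def Y'_def using ys fA by auto
  define \<Gamma> where "\<Gamma> = generate SG Y"
  have Gsub: "subgroup \<Gamma> SG" unfolding \<Gamma>_def by (rule S.generate_is_subgroup[OF YC])
  have GC: "\<Gamma> \<subseteq> carrier SG" using Gsub subgroup.subset by blast
  have finG: "finite \<Gamma>" using GC finite_SD finite_subset by blast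
  define I where "I = {(k::nat, j). k \<in> {1..d} \<and> j \<in> {1..d} \<and> k < j}"
  define C where "C = (\<lambda>(k,j). cm SG (Y' k) (Y' j)) ` I"
  have Y'C: "Y' i \<in> carrier SG" if "i \<in> {1..d}" for i using YC that unfolding Y_def by auto
  have CC: "C \<subseteq> carrier SG"
  proof
    fix c assume "c \<in> C"
    then obtain k j where kj: "k \<in> {1..d}" "j \<in> {1..d}" "c = cm SG (Y' k) (Y' j)"
      unfolding C_def I_def by auto
    show "c \<in> carrier SG" unfolding kj(3) by (rule S.cm_closed[OF Y'C[OF kj(1)] Y'C[OF kj(2)]])
  qed
  have finI: "finite I" unfolding I_def
    by (rule finite_subset[of _ "{1..d} \<times> {1..d}"]) auto
  have finC: "finite C" unfolding C_def using finI by simp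
  define Zc where "Zc = {z \<in> carrier SG. \<forall>x\<in>carrier SG. z \<otimes>\<^bsub>SG\<^esub> x = x \<otimes>\<^bsub>SG\<^esub> z}"
  have Zsub: "subgroup Zc SG"
  proof (rule S.subgroupI)
    show "Zc \<subseteq> carrier SG" unfolding Zc_def by auto
    have "\<one>\<^bsub>SG\<^esub> \<in> Zc" unfolding Zc_def using S.one_closed S.l_one S.r_one
      by (simp del: SD_mult SD_one SD_carrier)
    thus "Zc \<noteq> {}" by auto
  next
    fix a assume a: "a \<in> Zc"
    hence ac: "a \<in> carrier SG" unfolding Zc_def by auto
    have "inv\<^bsub>SG\<^esub> a \<otimes>\<^bsub>SG\<^esub> x = x \<otimes>\<^bsub>SG\<^esub> inv\<^bsub>SG\<^esub> a" if x: "x \<in> carrier SG" for x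
    proof -
      have e: "a \<otimes>\<^bsub>SG\<^esub> x = x \<otimes>\<^bsub>SG\<^esub> a" using a x unfolding Zc_def by auto
      have "inv\<^bsub>SG\<^esub> a \<otimes>\<^bsub>SG\<^esub> x = inv\<^bsub>SG\<^esub> a \<otimes>\<^bsub>SG\<^esub> (x \<otimes>\<^bsub>SG\<^esub> a) \<otimes>\<^bsub>SG\<^esub> inv\<^bsub>SG\<^esub> a"
        using ac x by (simp add: S.m_assoc del: SD_mult SD_carrier SD_one)
      also have "\<dots> = inv\<^bsub>SG\<^esub> a \<otimes>\<^bsub>SG\<^esub> (a \<otimes>\<^bsub>SG\<^esub> x) \<otimes>\<^bsub>SG\<^esub> inv\<^bsub>SG\<^esub> a"
        by (simp only: e)
      also have "\<dots> = x \<otimes>\<^bsub>SG\<^esub> inv\<^bsub>SG\<^esub> a"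
        using ac x by (simp add: S.m_assoc[symmetric] del: SD_mult SD_carrier SD_one)
      finally show ?thesis .
    qed
    thus "inv\<^bsub>SG\<^esub> a \<in> Zc" unfolding Zc_def using S.inv_closed[OF ac]
      by (simp del: SD_mult SD_carrier)
  next
    fix a b assume a: "a \<in> Zc" and b: "b \<in> Zc"
    hence ac: "a \<in> carrier SG" "b \<in> carrier SG" unfolding Zc_def by auto
    have "a \<otimes>\<^bsub>SG\<^esub> b \<otimes>\<^bsub>SG\<^esub> x = x \<otimes>\<^bsub>SG\<^esub> (a \<otimes>\<^bsub>SG\<^esub> b)" if x: "x \<in> carrier SG" for x
    proof -
      have ea: "a \<otimes>\<^bsub>SG\<^esub> x = x \<otimes>\<^bsub>SG\<^esub> a" using a x unfolding Zc_def by auto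
      have eb: "b \<otimes>\<^bsub>SG\<^esub> x = x \<otimes>\<^bsub>SG\<^esub> b" using b x unfolding Zc_def by auto
      have "a \<otimes>\<^bsub>SG\<^esub> b \<otimes>\<^bsub>SG\<^esub> x = a \<otimes>\<^bsub>SG\<^esub> (b \<otimes>\<^bsub>SG\<^esub> x)"
        using ac x by (simp only: S.m_assoc)
      also have "\<dots> = a \<otimes>\<^bsub>SG\<^esub> x \<otimes>\<^bsub>SG\<^esub> b" using ac x by (simp only: eb S.m_assoc)
      also have "\<dots> = x \<otimes>\<^bsub>SG\<^esub> (a \<otimes>\<^bsub>SG\<^esub> b)" using ac x by (simp only: ea S.m_assoc)
      finally show ?thesis .
    qed
    thus "a \<otimes>\<^bsub>SG\<^esub> b \<in> Zc" unfolding Zc_def using S.m_closed[OF ac]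
      by (simp del: SD_mult SD_carrier)
  qed
  have CZ: "C \<subseteq> Zc"
  proof
    fix c assume c: "c \<in> C"
    then obtain k j where kj: "k \<in> {1..d}" "j \<in> {1..d}" "c = cm SG (Y' k) (Y' j)"
      unfolding C_def I_def by auto
    have "\<forall>x\<in>carrier SG. c \<otimes>\<^bsub>SG\<^esub> x = x \<otimes>\<^bsub>SG\<^esub> c"
      unfolding kj(3) by (intro ballI) (rule cm_SD_central[OF Y'C[OF kj(1)] Y'C[OF kj(2)]])
    moreover have "c \<in> carrier SG" using CC c by blast
    ultimately show "c \<in> Zc" unfolding Zc_def by (simp del: SD_mult SD_carrier)
  qed
  define N where "N = generate SG C"
  have Nsub: "subgroup N SG" unfolding N_def by (rule S.generate_is_subgroup[OF CC])
  have NZ: "N \<subseteq> Zc" unfolding N_def by (rule S.generate_subgroup_incl[OF CZ Zsub])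
  have zc: "z \<otimes>\<^bsub>SG\<^esub> x = x \<otimes>\<^bsub>SG\<^esub> z" if "z \<in> Zc" "x \<in> carrier SG" for z x
    using that by (simp add: Zc_def del: SD_mult SD_carrier)
  have cenN: "\<forall>n\<in>N. \<forall>x\<in>carrier SG. n \<otimes>\<^bsub>SG\<^esub> x = x \<otimes>\<^bsub>SG\<^esub> n"
    using zc NZ by (meson subsetD)
  have NC: "N \<subseteq> carrier SG" using Nsub subgroup.subset by blast
  have cen1: "\<forall>n\<in>{\<one>\<^bsub>SG\<^esub>}. \<forall>x\<in>carrier SG. n \<otimes>\<^bsub>SG\<^esub> x = x \<otimes>\<^bsub>SG\<^esub> n"
    using S.l_one S.r_one by (simp del: SD_mult SD_one)
  have "card (generate SG (C \<union> {\<one>\<^bsub>SG\<^esub>})) \<le> p ^ card C * card {\<one>\<^bsub>SG\<^esub>}"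
  proof (rule S.card_gen_bound[OF finite_SD S.triv_subgroup cen1 p1 finC CC])
    show "\<forall>s\<in>C. s [^]\<^bsub>SG\<^esub> p = \<one>\<^bsub>SG\<^esub>" using CC SD_exp by blast
    show "\<forall>s\<in>C. \<forall>t\<in>C. \<exists>n\<in>{\<one>\<^bsub>SG\<^esub>}. t \<otimes>\<^bsub>SG\<^esub> s = s \<otimes>\<^bsub>SG\<^esub> t \<otimes>\<^bsub>SG\<^esub> n"
    proof (intro ballI)
      fix s t assume s: "s \<in> C" and t: "t \<in> C"
      have "t \<in> Zc" "s \<in> carrier SG" using t s CZ CC by auto
      hence "t \<otimes>\<^bsub>SG\<^esub> s = s \<otimes>\<^bsub>SG\<^esub> t" by (rule zc)
      moreover have sc': "s \<in> carrier SG" "t \<in> carrier SG" using s t CC by auto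
      ultimately have "t \<otimes>\<^bsub>SG\<^esub> s = s \<otimes>\<^bsub>SG\<^esub> t \<otimes>\<^bsub>SG\<^esub> \<one>\<^bsub>SG\<^esub>"
        by (simp only: S.r_one[OF S.m_closed[OF sc'(1) sc'(2)]])
      thus "\<exists>n\<in>{\<one>\<^bsub>SG\<^esub>}. t \<otimes>\<^bsub>SG\<^esub> s = s \<otimes>\<^bsub>SG\<^esub> t \<otimes>\<^bsub>SG\<^esub> n"
        by (rule bexI) simp
    qed
  qed
  moreover have "N \<subseteq> generate SG (C \<union> {\<one>\<^bsub>SG\<^esub>})" unfolding N_def by (rule S.mono_generate) auto
  moreover have "finite (generate SG (C \<union> {\<one>\<^bsub>SG\<^esub>}))"
    using S.generate_incl[of "C \<union> {\<one>\<^bsub>SG\<^esub>}"] CC finite_SD finite_subset S.one_closed by blast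
  ultimately have cN: "card N \<le> p ^ card C"
  proof -
    assume a1: "card (generate SG (C \<union> {\<one>\<^bsub>SG\<^esub>})) \<le> p ^ card C * card {\<one>\<^bsub>SG\<^esub>}"
      and a2: "N \<subseteq> generate SG (C \<union> {\<one>\<^bsub>SG\<^esub>})" and a3: "finite (generate SG (C \<union> {\<one>\<^bsub>SG\<^esub>}))"
    have "card N \<le> card (generate SG (C \<union> {\<one>\<^bsub>SG\<^esub>}))" by (rule card_mono[OF a3 a2])
    thus ?thesis using a1 by simp
  qed
  have cC: "card C \<le> d choose 2"
    using card_image_le[OF finI, of "\<lambda>(k,j). cm SG (Y' k) (Y' j)"] card_pairs[of d]
    unfolding C_def I_def by linarith
  have cY: "card Y \<le> d" unfolding Y_def using card_image_le[of "{1..d}" Y'] by simp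
  have "card (generate SG (Y \<union> N)) \<le> p ^ card Y * card N"
  proof (rule S.card_gen_bound[OF finite_SD Nsub cenN p1])
    show "finite Y" unfolding Y_def by simp
    show "Y \<subseteq> carrier SG" by (rule YC)
    show "\<forall>s\<in>Y. s [^]\<^bsub>SG\<^esub> p = \<one>\<^bsub>SG\<^esub>" using YC SD_exp by blast
    show "\<forall>s\<in>Y. \<forall>t\<in>Y. \<exists>n\<in>N. t \<otimes>\<^bsub>SG\<^esub> s = s \<otimes>\<^bsub>SG\<^esub> t \<otimes>\<^bsub>SG\<^esub> n"
    proof (intro ballI)
      fix s t assume s: "s \<in> Y" and t: "t \<in> Y"
      then obtain k j where kj: "k \<in> {1..d}" "j \<in> {1..d}" "s = Y' k" "t = Y' j" unfolding Y_def by auto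
      have sc: "s \<in> carrier SG" "t \<in> carrier SG" using s t YC by auto
      have cmN: "cm SG t s \<in> N"
      proof (cases "j < k")
        case True
        hence "cm SG t s \<in> C" unfolding C_def
          by (intro image_eqI[where x="(j,k)"]) (use kj in \<open>auto simp: I_def\<close>)
        thus ?thesis unfolding N_def by (rule generate.incl)
      next
        case False
        show ?thesis
        proof (cases "j = k")
          case True
          hence "t = s" using kj by simp
          hence "cm SG t s = \<one>\<^bsub>SG\<^esub>" using S.cm_self[OF sc(1)] by simp
          thus ?thesis using subgroup.one_closed[OF Nsub] by simp
        next
          case False
          hence "k < j" using \<open>\<not> j < k\<close> by simp
          hence "cm SG s t \<in> C" unfolding C_def
            by (intro image_eqI[where x="(k,j)"]) (use kj in \<open>auto simp: I_def\<close>)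
          hence "cm SG s t \<in> N" unfolding N_def by (rule generate.incl)
          hence "inv\<^bsub>SG\<^esub> (cm SG s t) \<in> N" using subgroup.m_inv_closed[OF Nsub] by blast
          thus ?thesis using S.cm_inv sc by simp
        qed
      qed
      have "t \<otimes>\<^bsub>SG\<^esub> s = cm SG t s \<otimes>\<^bsub>SG\<^esub> (s \<otimes>\<^bsub>SG\<^esub> t)" by (rule S.cm_ident[OF sc(1) sc(2)])
      also have "\<dots> = (s \<otimes>\<^bsub>SG\<^esub> t) \<otimes>\<^bsub>SG\<^esub> cm SG t s"
        using zc[OF subsetD[OF NZ cmN] S.m_closed[OF sc(1) sc(2)]] by simp
      finally show "\<exists>n\<in>N. t \<otimes>\<^bsub>SG\<^esub> s = s \<otimes>\<^bsub>SG\<^esub> t \<otimes>\<^bsub>SG\<^esub> n" using cmN by (rule bexI)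
    qed
  qed
  moreover have "\<Gamma> \<subseteq> generate SG (Y \<union> N)" unfolding \<Gamma>_def by (rule S.mono_generate) auto
  moreover have "finite (generate SG (Y \<union> N))"
    using S.generate_incl[of "Y \<union> N"] YC NC finite_SD finite_subset by blast
  ultimately have "card \<Gamma> \<le> p ^ card Y * card N" by (meson card_mono le_trans)
  also have "\<dots> \<le> p ^ d * p ^ (d choose 2)"
  proof (rule mult_le_mono)
    show "p ^ card Y \<le> p ^ d" using cY p1 by (intro power_increasing) auto
    have "p ^ card C \<le> p ^ (d choose 2)" using cC p1 by (intro power_increasing) auto
    thus "card N \<le> p ^ (d choose 2)" using cN by linarith
  qed
  finally have cG: "card \<Gamma> \<le> card (carrier D)" using cardD by simp
  have hom: "group_hom SG D fst"
    unfolding group_hom_def group_hom_axioms_def hom_def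
    using S.group_axioms group_axioms by auto
  have img: "fst ` \<Gamma> = carrier D"
  proof -
    have "fst ` \<Gamma> = generate D (fst ` Y)" unfolding \<Gamma>_def
      using group_hom.generate_img[OF hom YC] by simp
    also have "fst ` Y = y ` {1..d}" unfolding Y_def Y'_def by (simp add: image_image)
    finally show ?thesis using gen by simp
  qed
  have "card (fst ` \<Gamma>) = card \<Gamma>"
    using card_image_le[OF finG, of fst] cG img by simp
  hence inj: "inj_on fst \<Gamma>" using eq_card_imp_inj_on[OF finG] by blast
  define \<tau> where "\<tau> x = snd (the_inv_into \<Gamma> fst x)" for x
  have pt: "(x, \<tau> x) \<in> \<Gamma>" if x: "x \<in> carrier D" for x
  proof -
    have xi: "x \<in> fst ` \<Gamma>" using img x by simp
    have "the_inv_into \<Gamma> fst x \<in> \<Gamma>" using the_inv_into_into[OF inj xi] by blast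
    moreover have "fst (the_inv_into \<Gamma> fst x) = x" using f_the_inv_into_f[OF inj xi] .
    ultimately show ?thesis unfolding \<tau>_def by (metis prod.collapse)
  qed
  have uniq: "a = (fst a, \<tau> (fst a))" if a: "a \<in> \<Gamma>" for a
  proof -
    have "fst a \<in> carrier D" using a GC by auto
    hence "(fst a, \<tau> (fst a)) \<in> \<Gamma>" by (rule pt)
    thus ?thesis by (intro inj_onD[OF inj _ a]) simp_all
  qed
  have der: "is_derivation D p d \<delta> \<tau>"
    unfolding is_derivation_def
  proof (intro conjI ballI)
    fix x assume "x \<in> carrier D"
    thus "\<tau> x \<in> Amod p d" using pt GC by auto
  next
    fix x z assume x: "x \<in> carrier D" and z: "z \<in> carrier D"
    have "(x, \<tau> x) \<otimes>\<^bsub>SG\<^esub> (z, \<tau> z) \<in> \<Gamma>"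
      using subgroup.m_closed[OF Gsub pt[OF x] pt[OF z]] .
    from uniq[OF this] show "\<tau> (x \<otimes> z) = addA p (actA p d \<delta> z (\<tau> x)) (\<tau> z)" by simp
  qed
  moreover have "\<forall>i\<in>{1..d}. \<tau> (y i) = f i"
  proof
    fix i assume i: "i \<in> {1..d}"
    have "Y' i \<in> \<Gamma>" unfolding \<Gamma>_def Y_def using i generate.incl[of "Y' i" "Y' ` {1..d}" SG] by blast
    from uniq[OF this] show "\<tau> (y i) = f i" unfolding Y'_def by simp
  qed
  ultimately show ?thesis by blast
qed

end


theorem lemma3p6:
  fixes D :: "('a, 'b) monoid_scheme" and p d :: nat and y :: "nat \<Rightarrow> 'a"
    and \<delta> :: "nat \<Rightarrow> 'a \<Rightarrow> int" and f :: "nat \<Rightarrow> nat \<Rightarrow> int"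
  assumes "Factorial_Ring.prime p" and "odd p" and "d \<ge> 2"
    and "group D" and "finite (carrier D)"
    and "y ` {1..d} \<subseteq> carrier D"
    and "generate D (y ` {1..d}) = carrier D"
    and "\<forall>x\<in>carrier D. x [^]\<^bsub>D\<^esub> p = \<one>\<^bsub>D\<^esub>"
    and "gamma2 D \<noteq> {\<one>\<^bsub>D\<^esub>}" and "gamma3 D = {\<one>\<^bsub>D\<^esub>}"
    and "card (rcosets\<^bsub>D\<^esub> (frattini D)) = p ^ d"
    and "card (rcosets\<^bsub>D\<lparr>carrier := frattini D\<rparr>\<^esub> (gamma3 D)) = p ^ (d choose 2)"
    and "\<forall>j\<in>{1..d}. \<delta> j \<in> hom D (add_monoid (residue_ring (int p)))"
    and "\<forall>j\<in>{1..d}. \<forall>i\<in>{1..d}. \<delta> j (y i) = (if i = j then 1 else 0)"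
    and "\<forall>i\<in>{1..d}. f i \<in> Amod p d"
  shows "\<exists>\<tau>. is_derivation D p d \<delta> \<tau> \<and> (\<forall>i\<in>{1..d}. \<tau> (y i) = f i)"
proof -
  note assms = assms
  have grp: "group D" by fact
  interpret D: group D by (rule grp)
  have p1: "1 < p" using assms(1) prime_gt_1_nat by blast
  have hom: "\<And>j. j \<in> {1..d} \<Longrightarrow> \<delta> j \<in> hom D (add_monoid (residue_ring (int p)))"
    using assms(13) by blast
  have drange: "\<And>j x. j \<in> {1..d} \<Longrightarrow> x \<in> carrier D \<Longrightarrow> \<delta> j x \<in> {0..<int p}"
  proof -
    fix j x assume j: "j \<in> {1..d}" and x: "x \<in> carrier D"
    have "\<delta> j x \<in> carrier (add_monoid (residue_ring (int p)))"
      using hom[OF j] x unfolding hom_def by auto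
    thus "\<delta> j x \<in> {0..<int p}" by (simp add: residue_ring_def)
  qed
  have dmult: "\<And>j x y. j \<in> {1..d} \<Longrightarrow> x \<in> carrier D \<Longrightarrow> y \<in> carrier D \<Longrightarrow>
      \<delta> j (x \<otimes>\<^bsub>D\<^esub> y) = (\<delta> j x + \<delta> j y) mod int p"
  proof -
    fix j x y assume j: "j \<in> {1..d}" and x: "x \<in> carrier D" and y: "y \<in> carrier D"
    have "\<delta> j (x \<otimes>\<^bsub>D\<^esub> y) = \<delta> j x \<otimes>\<^bsub>add_monoid (residue_ring (int p))\<^esub> \<delta> j y"
      using hom[OF j] x y unfolding hom_def by auto
    thus "\<delta> j (x \<otimes>\<^bsub>D\<^esub> y) = (\<delta> j x + \<delta> j y) mod int p" by (simp add: residue_ring_def)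
  qed
  have cen2: "\<forall>x\<in>carrier D. \<forall>y\<in>carrier D. \<forall>z\<in>carrier D.
      cm D x y \<otimes>\<^bsub>D\<^esub> z = z \<otimes>\<^bsub>D\<^esub> cm D x y"
  proof (intro ballI)
    fix x y z assume x: "x \<in> carrier D" and y: "y \<in> carrier D" and z: "z \<in> carrier D"
    define c where "c = cm D x y"
    have cc: "c \<in> carrier D" unfolding c_def by (rule D.cm_closed[OF x y])
    have "c \<in> gamma2 D" unfolding gamma2_def comm_subgroup_def c_def cm_def
      by (rule generate.incl) (use x y in blast)
    hence "c \<otimes>\<^bsub>D\<^esub> z \<otimes>\<^bsub>D\<^esub> inv\<^bsub>D\<^esub> c \<otimes>\<^bsub>D\<^esub> inv\<^bsub>D\<^esub> z \<in> gamma3 D"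
      unfolding gamma3_def comm_subgroup_def
      by (intro generate.incl) (use z in blast)
    hence e: "c \<otimes>\<^bsub>D\<^esub> z \<otimes>\<^bsub>D\<^esub> inv\<^bsub>D\<^esub> c \<otimes>\<^bsub>D\<^esub> inv\<^bsub>D\<^esub> z = \<one>\<^bsub>D\<^esub>" using assms(10) by simp
    have "c \<otimes>\<^bsub>D\<^esub> z \<otimes>\<^bsub>D\<^esub> inv\<^bsub>D\<^esub> (z \<otimes>\<^bsub>D\<^esub> c) = \<one>\<^bsub>D\<^esub>"
      using e cc z by (simp add: D.inv_mult_group D.m_assoc)
    hence "c \<otimes>\<^bsub>D\<^esub> z = \<one>\<^bsub>D\<^esub> \<otimes>\<^bsub>D\<^esub> (z \<otimes>\<^bsub>D\<^esub> c)"
      using D.inv_solve_right'[of "\<one>\<^bsub>D\<^esub>" "c \<otimes>\<^bsub>D\<^esub> z" "z \<otimes>\<^bsub>D\<^esub> c"] cc z by simp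
    thus "cm D x y \<otimes>\<^bsub>D\<^esub> z = z \<otimes>\<^bsub>D\<^esub> cm D x y" using cc z unfolding c_def by simp
  qed
  define \<Phi> where "\<Phi> = frattini D"
  have Phisub: "subgroup \<Phi> D"
  proof (rule D.subgroupI)
    show "\<Phi> \<subseteq> carrier D" unfolding \<Phi>_def frattini_def by auto
    have "\<one>\<^bsub>D\<^esub> \<in> \<Phi>" unfolding \<Phi>_def frattini_def maximal_subgroup_def
      using subgroup.one_closed by auto
    thus "\<Phi> \<noteq> {}" by auto
  next
    fix a assume a: "a \<in> \<Phi>"
    hence ac: "a \<in> carrier D" and aH: "\<And>H. maximal_subgroup D H \<Longrightarrow> a \<in> H"
      unfolding \<Phi>_def frattini_def by auto
    have "inv\<^bsub>D\<^esub> a \<in> H" if "maximal_subgroup D H" for H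
      using subgroup.m_inv_closed[OF _ aH[OF that]] that unfolding maximal_subgroup_def by blast
    thus "inv\<^bsub>D\<^esub> a \<in> \<Phi>" unfolding \<Phi>_def frattini_def using D.inv_closed[OF ac] by blast
  next
    fix a b assume a: "a \<in> \<Phi>" and b: "b \<in> \<Phi>"
    hence ac: "a \<in> carrier D" "b \<in> carrier D"
      and aH: "\<And>H. maximal_subgroup D H \<Longrightarrow> a \<in> H" "\<And>H. maximal_subgroup D H \<Longrightarrow> b \<in> H"
      unfolding \<Phi>_def frattini_def by auto
    have "a \<otimes>\<^bsub>D\<^esub> b \<in> H" if "maximal_subgroup D H" for H
      using subgroup.m_closed[OF _ aH(1)[OF that] aH(2)[OF that]] that unfolding maximal_subgroup_def by blast
    thus "a \<otimes>\<^bsub>D\<^esub> b \<in> \<Phi>" unfolding \<Phi>_def frattini_def using D.m_closed[OF ac] by blast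
  qed
  have l1: "card (rcosets\<^bsub>D\<^esub> \<Phi>) * card \<Phi> = card (carrier D)"
    using D.lagrange[OF Phisub] unfolding order_def .
  have gP: "group (D\<lparr>carrier := \<Phi>\<rparr>)" by (rule subgroup.subgroup_is_group[OF Phisub grp])
  have l2: "card (rcosets\<^bsub>D\<lparr>carrier := \<Phi>\<rparr>\<^esub> {\<one>\<^bsub>D\<^esub>}) * card {\<one>\<^bsub>D\<^esub>} = card \<Phi>"
    using group.lagrange[OF gP group.triv_subgroup[OF gP]] unfolding order_def by simp
  have cardD: "card (carrier D) = p ^ d * p ^ (d choose 2)"
    using l1 l2 assms(11,12) assms(10) unfolding \<Phi>_def by simp
  have "setting3 D p d \<delta> y f"
    unfolding setting3_def setting2_def setting_def setting3_axioms_def setting2_axioms_def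
      setting_axioms_def
    using grp p1 drange dmult assms(2,5,8,6,7,15) cen2 cardD by blast
  thus ?thesis by (rule setting3.main)
qed


end
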